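(* For any extended string $h\in \mathcal{L}_e(M)$, let $\beta=\mathsf{tam}(h)$ and $(q,\tilde{q},z)=f(h)$. Then $\mathcal{E}_{S/G}^C(\beta)=\mathsf{UR}_{\Delta_H(z)}(q)$.
   Context: Let $G=(X,\Sigma,\delta,X_0)$ be a finite-state automaton (partial transition function $\delta$, set of initial states $X_0$), with $\Sigma=\Sigma_o\dot\cup\Sigma_{uo}=\Sigma_c\dot\cup\Sigma_{uc}$ (observable/unobservable, controllable/uncontrollable events), and natural projection $P:\Sigma^*\to\Sigma_o^*$. For a state $x$ of an automaton, $\Delta(x)$ denotes the set of events defined at $x$. A partial-observation supervisor $S:P(\mathcal{L}(G))\to\Gamma$ (with $\Gamma=\{\gamma\subseteq\Sigma:\Sigma_{uc}\subseteq\gamma\}$) is realized by a deterministic automaton $H=(Z,\Sigma,\xi,z_0)$ that changes state only on observable events and satisfies $\Delta_H(\xi(z_0,s))=S(P(s))$ for all $s\in\mathcal{L}(S/G)$, where $\mathcal{L}(S/G)$ is the closed-loop language (union over $x_0\in X_0$ of strings generated from $x_0$ with each event enabled by $S$ at the observation of the preceding prefix). For $q\subseteq X$, $\gamma\subseteq\Sigma$, $\sigma\in\Sigma_o$: $\mathsf{UR}_\gamma(q)=\{\delta(x,s):x\in q,s\in(\Sigma_{uo}\cap\gamma)^*\}$, $\mathsf{NX}_\sigma(q)=\{\delta(x,\sigma):x\in q\}$, $\mathsf{NX}_\epsilon(q)=q$, and $\mathcal{O}(q,\gamma)=\{\sigma\in\Sigma_o\cap\gamma:\exists x\in q,w\in(\Sigma_{uo}\cap\gamma)^*,\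 \delta(x,w\sigma)\text{ defined}\}$. The supervisor's current-state estimate after observation $\alpha\in P(\mathcal{L}(S/G))$ is $\mathcal{E}^C_{S/G}(\alpha)=\{\delta(x_0,s):x_0\in X_0,s\in\mathcal{L}(S/G,x_0),P(s)=\alpha\}$ (empty if $\alpha\notin P(\mathcal{L}(S/G))$). The augmented system $\tilde G$ has states $\tilde X\subseteq X_0\times X$, initial states $\tilde X_0=\{(x_0,x_0):x_0\in X_0\}$ and $\tilde\delta((x_0,x),\sigma)=(x_0,\delta(x,\sigma))$; $\widetilde{\mathsf{UR}},\widetilde{\mathsf{NX}}$ denote the same operators on $\tilde G$. A set $\Sigma_v\subseteq\Sigma_o$ of vulnerable events is given; for $\sigma\in\Sigma_o$, the attacker action set is $\mathcal{V}(\sigma)=\{\hat\sigma':\sigma'\in\Sigma_v\}\cup\{\hat\epsilon\}$ if $\sigma\in\Sigma_v$ and $\mathcal{V}(\sigma)=\{\hat\sigma\}$ otherwise (hatted events denote tampered observations). The All Attack Structure is $M=(Q,\Sigma_M,f,q_0)$ with $Q=Q_e\dot\cup Q_a$, environment states $Q_e\subseteq 2^X\times2^{\tilde X}\times(Z\cup\{z_{\mathsf{att}}\})$, attack states $Q_a\subseteq 2^X\times2^{\tilde X}\times Z\times\Sigma_o$, initial state $q_0=(X_0,\tilde X_0,z_0)$, events $\Sigma_M=\Sigma_o\cup\hat\Sigma_o^\epsilon$, and $\Delta_H(z_{\mathsf{att}})=\emptyset$. Transitions: from $q_e=(q,\tilde q,z)\in Q_e$, the enabled events are $\mathcal{O}(\tilde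 q,\Delta_H(z))$ if $z\in Z$ and none if $z=z_{\mathsf{att}}$, with $f(q_e,\sigma)=(q,\tilde q,z,\sigma)$; from $q_a=(q,\tilde q,z,\sigma)$, the enabled events are $\mathcal{V}(\sigma)$, and for $\hat\sigma_a\in\mathcal{V}(\sigma)$, $f(q_a,\hat\sigma_a)=(q',\tilde q',z')$ with $q'=\mathsf{NX}_{\sigma_a}(\mathsf{UR}_{\Delta_H(z)}(q))$, $\tilde q'=\widetilde{\mathsf{NX}}_{\sigma}(\widetilde{\mathsf{UR}}_{\Delta_H(z)}(\tilde q))$, and $z'=\xi(z,\sigma_a)$ if $q'\neq\emptyset$, $z'=z_{\mathsf{att}}$ if $q'=\emptyset$. $\mathcal{L}_e(M)$ is the set of strings of $M$ ending in an environment state; for $h=\sigma_1\hat\sigma_{a1}\cdots\sigma_n\hat\sigma_{an}\in\mathcal{L}_e(M)$, $\mathsf{tam}(h)=\sigma_{a1}\cdots\sigma_{an}$ (hats removed, $\hat\epsilon$ becoming $\epsilon$), i.e., the tampered observation received by the supervisor. *)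

theory Defs
  imports Main
begin

fun dstar :: "('s \<Rightarrow> 'e \<Rightarrow> 's option) \<Rightarrow> 's \<Rightarrow> 'e list \<Rightarrow> 's option" where
  "dstar d x [] = Some x"
| "dstar d x (e # s) = (case d x e of None \<Rightarrow> None | Some y \<Rightarrow> dstar d y s)"

definition proj :: "'e set \<Rightarrow> 'e list \<Rightarrow> 'e list" where
  "proj Sigo s = filter (\<lambda>e. e \<in> Sigo) s"

definition gen_lang :: "('x \<Rightarrow> 'e \<Rightarrow> 'x option) \<Rightarrow> 'x set \<Rightarrow> 'e list set" where
  "gen_lang d X0 = {s. \<exists>x0\<in>X0. dstar d x0 s \<noteq> None}"

definition closed_loop :: "('x \<Rightarrow> 'e \<Rightarrow> 'x option) \<Rightarrow> 'e set \<Rightarrow> ('e list \<Rightarrow> 'e set) \<Rightarrow> 'x \<Rightarrow> 'e list set" where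
  "closed_loop d Sigo S x0 =
     {s. dstar d x0 s \<noteq> None \<and> (\<forall>i<length s. s ! i \<in> S (proj Sigo (take i s)))}"

definition CL_lang :: "('x \<Rightarrow> 'e \<Rightarrow> 'x option) \<Rightarrow> 'e set \<Rightarrow> ('e list \<Rightarrow> 'e set) \<Rightarrow> 'x set \<Rightarrow> 'e list set" where
  "CL_lang d Sigo S X0 = (\<Union>x0\<in>X0. closed_loop d Sigo S x0)"

definition est :: "('x \<Rightarrow> 'e \<Rightarrow> 'x option) \<Rightarrow> 'e set \<Rightarrow> ('e list \<Rightarrow> 'e set) \<Rightarrow> 'x set \<Rightarrow> 'e list \<Rightarrow> 'x set" where
  "est d Sigo S X0 \<alpha> =
     {y. \<exists>x0\<in>X0. \<exists>s\<in>closed_loop d Sigo S x0. proj Sigo s = \<alpha> \<and> dstar d x0 s = Some y}"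

definition UR :: "('s \<Rightarrow> 'e \<Rightarrow> 's option) \<Rightarrow> 'e set \<Rightarrow> 'e set \<Rightarrow> 's set \<Rightarrow> 's set" where
  "UR d Siguo \<gamma> q = {y. \<exists>x\<in>q. \<exists>s. set s \<subseteq> Siguo \<inter> \<gamma> \<and> dstar d x s = Some y}"

definition NX :: "('s \<Rightarrow> 'e \<Rightarrow> 's option) \<Rightarrow> 'e \<Rightarrow> 's set \<Rightarrow> 's set" where
  "NX d \<sigma> q = {y. \<exists>x\<in>q. d x \<sigma> = Some y}"

text \<open>NX for an observable event or epsilon (None = epsilon, NX_epsilon(q) = q).\<close>
definition NXo :: "('s \<Rightarrow> 'e \<Rightarrow> 's option) \<Rightarrow> 'e option \<Rightarrow> 's set \<Rightarrow> 's set" where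
  "NXo d a q = (case a of None \<Rightarrow> q | Some \<sigma> \<Rightarrow> NX d \<sigma> q)"

definition Oen :: "('s \<Rightarrow> 'e \<Rightarrow> 's option) \<Rightarrow> 'e set \<Rightarrow> 'e set \<Rightarrow> 's set \<Rightarrow> 'e set \<Rightarrow> 'e set" where
  "Oen d Sigo Siguo q \<gamma> =
     {\<sigma> \<in> Sigo \<inter> \<gamma>. \<exists>x\<in>q. \<exists>w. set w \<subseteq> Siguo \<inter> \<gamma> \<and> dstar d x (w @ [\<sigma>]) \<noteq> None}"

text \<open>Augmented system: states (x0, x), transition on the second component.\<close>
definition aug :: "('x \<Rightarrow> 'e \<Rightarrow> 'x option) \<Rightarrow> ('x \<times> 'x) \<Rightarrow> 'e \<Rightarrow> ('x \<times> 'x) option" where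
  "aug d p \<sigma> = map_option (\<lambda>y. (fst p, y)) (d (snd p) \<sigma>)"

definition DeltaH :: "('z \<Rightarrow> 'e \<Rightarrow> 'z option) \<Rightarrow> 'z \<Rightarrow> 'e set" where
  "DeltaH xi z = {e. xi z e \<noteq> None}"

text \<open>Third component of environment states: \<open>Some z\<close> for z in Z, \<open>None\<close> for z_att,
  with Delta_H(z_att) = {}.\<close>
definition DeltaHo :: "('z \<Rightarrow> 'e \<Rightarrow> 'z option) \<Rightarrow> 'z option \<Rightarrow> 'e set" where
  "DeltaHo xi zo = (case zo of None \<Rightarrow> {} | Some z \<Rightarrow> DeltaH xi z)"

datatype ('x, 'z, 'e) mstate =
    Env "'x set" "('x \<times> 'x) set" "'z option"
  | Att "'x set" "('x \<times> 'x) set" 'z 'e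

text \<open>Events of M: \<open>Obs \<sigma>\<close> is sigma in Sigma_o; \<open>Hat (Some \<sigma>)\<close> is the tampered observation
  hat sigma, \<open>Hat None\<close> is hat epsilon.\<close>
datatype 'e mevent = Obs 'e | Hat "'e option"

definition attV :: "'e set \<Rightarrow> 'e \<Rightarrow> 'e mevent set" where
  "attV Sigv \<sigma> = (if \<sigma> \<in> Sigv then (\<lambda>a. Hat (Some a)) ` Sigv \<union> {Hat None} else {Hat (Some \<sigma>)})"

fun fM :: "('x \<Rightarrow> 'e \<Rightarrow> 'x option) \<Rightarrow> 'e set \<Rightarrow> 'e set \<Rightarrow> 'e set \<Rightarrow> ('z \<Rightarrow> 'e \<Rightarrow> 'z option)
           \<Rightarrow> ('x, 'z, 'e) mstate \<Rightarrow> 'e mevent \<Rightarrow> ('x, 'z, 'e) mstate option" where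
  "fM d Sigo Siguo Sigv xi (Env q qt (Some z)) (Obs \<sigma>) =
     (if \<sigma> \<in> Oen (aug d) Sigo Siguo qt (DeltaH xi z) then Some (Att q qt z \<sigma>) else None)"
| "fM d Sigo Siguo Sigv xi (Att q qt z \<sigma>) (Hat a) =
     (if Hat a \<in> attV Sigv \<sigma> then
        (let q' = NXo d a (UR d Siguo (DeltaH xi z) q);
             qt' = NX (aug d) \<sigma> (UR (aug d) Siguo (DeltaH xi z) qt)
         in if q' = {} then Some (Env q' qt' None)
            else (case a of
                    None \<Rightarrow> Some (Env q' qt' (Some z))
                  | Some \<sigma>a \<Rightarrow> map_option (\<lambda>z'. Env q' qt' (Some z')) (xi z \<sigma>a)))
      else None)"
| "fM d Sigo Siguo Sigv xi _ _ = None"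

definition M_init :: "'x set \<Rightarrow> 'z \<Rightarrow> ('x, 'z, 'e) mstate" where
  "M_init X0 z0 = Env X0 ((\<lambda>x. (x, x)) ` X0) (Some z0)"

definition fMh :: "('x \<Rightarrow> 'e \<Rightarrow> 'x option) \<Rightarrow> 'e set \<Rightarrow> 'e set \<Rightarrow> 'e set \<Rightarrow> ('z \<Rightarrow> 'e \<Rightarrow> 'z option)
           \<Rightarrow> 'x set \<Rightarrow> 'z \<Rightarrow> 'e mevent list \<Rightarrow> ('x, 'z, 'e) mstate option" where
  "fMh d Sigo Siguo Sigv xi X0 z0 h = dstar (fM d Sigo Siguo Sigv xi) (M_init X0 z0) h"

definition Le_M :: "('x \<Rightarrow> 'e \<Rightarrow> 'x option) \<Rightarrow> 'e set \<Rightarrow> 'e set \<Rightarrow> 'e set \<Rightarrow> ('z \<Rightarrow> 'e \<Rightarrow> 'z option)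
           \<Rightarrow> 'x set \<Rightarrow> 'z \<Rightarrow> 'e mevent list set" where
  "Le_M d Sigo Siguo Sigv xi X0 z0 =
     {h. \<exists>q qt zo. fMh d Sigo Siguo Sigv xi X0 z0 h = Some (Env q qt zo)}"

definition tam :: "'e mevent list \<Rightarrow> 'e list" where
  "tam h = concat (map (\<lambda>ev. case ev of Hat (Some a) \<Rightarrow> [a] | _ \<Rightarrow> []) h)"

end

theory Submission
  imports Defs
begin

lemma dstar_append: "dstar d x (s @ t) = (case dstar d x s of None \<Rightarrow> None | Some y \<Rightarrow> dstar d y t)"
  by (induction s arbitrary: x) (auto split: option.splits)

lemma dstar_snoc: "dstar d x (s @ [e]) = (case dstar d x s of None \<Rightarrow> None | Some y \<Rightarrow> d y e)"
  by (simp add: dstar_append split: option.splits)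

lemma proj_append: "proj P (s @ t) = proj P s @ proj P t"
  by (simp add: proj_def)

lemma filter_split_last:
  "filter P s = xs @ [c] \<Longrightarrow> \<exists>s1 u. s = s1 @ c # u \<and> filter P s1 = xs \<and> filter P u = []"
proof (induction s arbitrary: xs rule: rev_induct)
  case Nil then show ?case by simp
next
  case (snoc e s)
  show ?case
  proof (cases "P e")
    case True
    with snoc.prems have "filter P s = xs \<and> e = c" by simp
    then show ?thesis by (intro exI[of _ s] exI[of _ "[]"]) auto
  next
    case False
    with snoc.prems have "filter P s = xs @ [c]" by simp
    from snoc.IH[OF this] obtain s1 u where "s = s1 @ c # u" "filter P s1 = xs" "filter P u = []" by blast
    with False show ?thesis by (intro exI[of _ s1] exI[of _ "u @ [e]"]) auto
  qed
qed

lemma dstar_events: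
  assumes "\<And>x e y. d x e = Some y \<Longrightarrow> e \<in> A"
  shows "dstar d x s \<noteq> None \<Longrightarrow> set s \<subseteq> A"
proof (induction s arbitrary: x)
  case Nil then show ?case by simp
next
  case (Cons e s)
  then obtain y where "d x e = Some y" "dstar d y s \<noteq> None" by (auto split: option.splits)
  with Cons.IH assms show ?case by auto
qed

lemma UR_incl: "q \<subseteq> UR d U g q"
  unfolding UR_def by (auto intro!: exI[of _ "[]"])

lemma UR_idem: "UR d U g (UR d U g q) = UR d U g q"
proof
  show "UR d U g (UR d U g q) \<subseteq> UR d U g q"
  proof
    fix y assume "y \<in> UR d U g (UR d U g q)"
    then obtain x s x' s' where "x \<in> q" "set s \<subseteq> U \<inter> g" "dstar d x s = Some x'"
      "set s' \<subseteq> U \<inter> g" "dstar d x' s' = Some y"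
      unfolding UR_def by blast
    then have "set (s @ s') \<subseteq> U \<inter> g" "dstar d x (s @ s') = Some y"
      by (auto simp: dstar_append)
    with \<open>x \<in> q\<close> show "y \<in> UR d U g q" unfolding UR_def by blast
  qed
qed (rule UR_incl)

lemma UR_empty_set: "UR d U g {} = {}"
  unfolding UR_def by auto

lemma UR_empty_ev: "UR d U {} q = q"
  unfolding UR_def by auto

lemma H_self:
  assumes "\<And>z e. z \<in> Z \<Longrightarrow> e \<in> U \<Longrightarrow> xi z e \<noteq> None \<Longrightarrow> xi z e = Some z"
  shows "z \<in> Z \<Longrightarrow> set u \<subseteq> U \<Longrightarrow> dstar xi z u \<noteq> None \<Longrightarrow> dstar xi z u = Some z"
proof (induction u)
  case Nil then show ?case by simp
next
  case (Cons e u)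
  then have "xi z e \<noteq> None" by (auto split: option.splits)
  with assms Cons.prems have "xi z e = Some z" by auto
  with Cons show ?case by simp
qed

locale ctx =
  fixes Sigma Sigo Siguo Siguc Sigv :: "'e set"
    and d :: "'x \<Rightarrow> 'e \<Rightarrow> 'x option" and X0 :: "'x set"
    and S :: "'e list \<Rightarrow> 'e set"
    and Z :: "'z set" and xi :: "'z \<Rightarrow> 'e \<Rightarrow> 'z option" and z0 :: 'z
  assumes d_closed: "\<And>x e y. d x e = Some y \<Longrightarrow> e \<in> Sigma"
    and part_o: "Sigo \<union> Siguo = Sigma" "Sigo \<inter> Siguo = {}"
    and Sigv_sub: "Sigv \<subseteq> Sigo"
    and z0_Z: "z0 \<in> Z"
    and xi_closed: "\<And>z e z'. z \<in> Z \<Longrightarrow> xi z e = Some z' \<Longrightarrow> z' \<in> Z"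
    and H_unobs: "\<And>z e. z \<in> Z \<Longrightarrow> e \<in> Siguo \<Longrightarrow> xi z e \<noteq> None \<Longrightarrow> xi z e = Some z"
    and H_realizes: "\<And>s. s \<in> CL_lang d Sigo S X0 \<Longrightarrow>
        \<exists>zs. dstar xi z0 s = Some zs \<and> DeltaH xi zs = S (proj Sigo s)"
begin

lemma proj_nil_uo: "dstar d x u \<noteq> None \<Longrightarrow> proj Sigo u = [] \<Longrightarrow> set u \<subseteq> Siguo"
proof -
  assume a: "dstar d x u \<noteq> None" "proj Sigo u = []"
  have "set u \<subseteq> Sigma" using dstar_events[where d=d and A=Sigma] d_closed a(1) by blast
  moreover have "\<forall>e\<in>set u. e \<notin> Sigo" using a(2) by (simp add: proj_def filter_empty_conv)
  ultimately show ?thesis using part_o by blast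
qed

lemma proj_uo: "set u \<subseteq> Siguo \<Longrightarrow> proj Sigo u = []"
  using part_o(2) by (auto simp: proj_def filter_empty_conv)

lemma cl_prefix: "s @ t \<in> closed_loop d Sigo S x0 \<Longrightarrow> s \<in> closed_loop d Sigo S x0"
proof -
  assume a: "s @ t \<in> closed_loop d Sigo S x0"
  then have "dstar d x0 s \<noteq> None" unfolding closed_loop_def by (auto simp: dstar_append split: option.splits)
  moreover have "\<forall>i<length s. s ! i \<in> S (proj Sigo (take i s))"
  proof (intro allI impI)
    fix i assume "i < length s"
    have all: "\<forall>i<length (s @ t). (s @ t) ! i \<in> S (proj Sigo (take i (s @ t)))"
      using a unfolding closed_loop_def by blast
    have "i < length (s @ t)" using \<open>i < length s\<close> by simp
    note all[rule_format, OF this]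
    with \<open>i < length s\<close> show "s ! i \<in> S (proj Sigo (take i s))" by (simp add: nth_append)
  qed
  ultimately show ?thesis unfolding closed_loop_def by blast
qed

lemma est_snoc:
  assumes sig: "\<sigma> \<in> Sigo"
  shows "est d Sigo S X0 (\<beta> @ [\<sigma>]) =
    (if \<sigma> \<in> S \<beta> then UR d Siguo (S (\<beta> @ [\<sigma>])) (NX d \<sigma> (est d Sigo S X0 \<beta>)) else {})"
proof -
  have sub: "y \<in> UR d Siguo (S (\<beta> @ [\<sigma>])) (NX d \<sigma> (est d Sigo S X0 \<beta>)) \<and> \<sigma> \<in> S \<beta>"
    if y: "y \<in> est d Sigo S X0 (\<beta> @ [\<sigma>])" for y
  proof -
    from y obtain x0 s where x0: "x0 \<in> X0" and s: "s \<in> closed_loop d Sigo S x0"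
      and ps: "proj Sigo s = \<beta> @ [\<sigma>]" and ds: "dstar d x0 s = Some y"
      unfolding est_def by blast
    from ps obtain s1 u where su: "s = s1 @ \<sigma> # u" and p1: "proj Sigo s1 = \<beta>" and pu: "proj Sigo u = []"
      unfolding proj_def using filter_split_last by metis
    have s1cl: "s1 \<in> closed_loop d Sigo S x0" using s su cl_prefix by simp
    then obtain x where x: "dstar d x0 s1 = Some x" unfolding closed_loop_def by auto
    from ds su x obtain x' where x': "d x \<sigma> = Some x'" and du: "dstar d x' u = Some y"
      by (auto simp: dstar_append split: option.splits)
    have xe: "x \<in> est d Sigo S X0 \<beta>" unfolding est_def using x0 s1cl p1 x by blast
    have uo: "set u \<subseteq> Siguo" using proj_nil_uo[of x' u] du pu by simp
    have cl: "\<forall>i<length s. s ! i \<in> S (proj Sigo (take i s))" using s unfolding closed_loop_def by blast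
    have sigS: "\<sigma> \<in> S \<beta>"
      using cl[rule_format, of "length s1"] su p1 by simp
    have "set u \<subseteq> S (\<beta> @ [\<sigma>])"
    proof
      fix e assume "e \<in> set u"
      then obtain j where j: "j < length u" "u ! j = e" by (auto simp: in_set_conv_nth)
      have "length s1 + 1 + j < length s" using j su by simp
      note cl[rule_format, OF this]
      moreover
      have "s ! (length s1 + 1 + j) = e" using su j by (simp add: nth_append)
      moreover have "take (length s1 + 1 + j) s = s1 @ \<sigma> # take j u" using su by simp
      moreover have "proj Sigo (take j u) = []"
        using uo proj_uo[of "take j u"] set_take_subset[of j u] by blast
      ultimately show "e \<in> S (\<beta> @ [\<sigma>])" using p1 sig by (simp add: proj_append proj_def)
    qed
    then have "y \<in> UR d Siguo (S (\<beta> @ [\<sigma>])) (NX d \<sigma> (est d Sigo S X0 \<beta>))"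
      unfolding UR_def NX_def using xe x' du uo by blast
    with sigS show ?thesis by blast
  qed
  have sup: "y \<in> est d Sigo S X0 (\<beta> @ [\<sigma>])"
    if sigS: "\<sigma> \<in> S \<beta>" and y: "y \<in> UR d Siguo (S (\<beta> @ [\<sigma>])) (NX d \<sigma> (est d Sigo S X0 \<beta>))" for y
  proof -
    from y obtain x' u x where u: "set u \<subseteq> Siguo \<inter> S (\<beta> @ [\<sigma>])" and du: "dstar d x' u = Some y"
      and x': "d x \<sigma> = Some x'" and xe: "x \<in> est d Sigo S X0 \<beta>"
      unfolding UR_def NX_def by blast
    from xe obtain x0 s1 where x0: "x0 \<in> X0" and s1: "s1 \<in> closed_loop d Sigo S x0"
      and p1: "proj Sigo s1 = \<beta>" and x: "dstar d x0 s1 = Some x"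
      unfolding est_def by blast
    define s where "s = s1 @ \<sigma> # u"
    have ds: "dstar d x0 s = Some y" unfolding s_def using x x' du by (simp add: dstar_append)
    have pu: "proj Sigo u = []" using u proj_uo by blast
    have ps: "proj Sigo s = \<beta> @ [\<sigma>]" unfolding s_def using p1 pu sig
      by (simp add: proj_append proj_def)
    have "\<forall>i<length s. s ! i \<in> S (proj Sigo (take i s))"
    proof (intro allI impI)
      fix i assume i: "i < length s"
      consider (a) "i < length s1" | (b) "i = length s1" | (c) "i > length s1" by linarith
      then show "s ! i \<in> S (proj Sigo (take i s))"
      proof cases
        case a
        have "\<forall>i<length s1. s1 ! i \<in> S (proj Sigo (take i s1))" using s1 unfolding closed_loop_def by blast
        note this[rule_format, OF a]
        then show ?thesis using a unfolding s_def by (simp add: nth_append)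
      next
        case b
        then show ?thesis using sigS p1 unfolding s_def by simp
      next
        case c
        define j where "j = i - length s1 - 1"
        have ij: "i = length s1 + 1 + j" using c j_def by simp
        have j: "j < length u" using i ij unfolding s_def by simp
        have "s ! i = u ! j" unfolding s_def ij by (simp add: nth_append)
        moreover have "take i s = s1 @ \<sigma> # take j u" unfolding s_def ij by simp
        moreover have "proj Sigo (take j u) = []"
          using u proj_uo[of "take j u"] set_take_subset[of j u] by blast
        moreover have "u ! j \<in> S (\<beta> @ [\<sigma>])" using u j nth_mem by blast
        ultimately show ?thesis using p1 sig by (simp add: proj_append proj_def)
      qed
    qed
    then have "s \<in> closed_loop d Sigo S x0" unfolding closed_loop_def using ds by simp
    then show ?thesis unfolding est_def using x0 ps ds by blast
  qed
  show ?thesis using sub sup by auto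
qed

lemma est_nil: "est d Sigo S X0 [] = UR d Siguo (S []) X0"
proof
  show "est d Sigo S X0 [] \<subseteq> UR d Siguo (S []) X0"
  proof
    fix y assume "y \<in> est d Sigo S X0 []"
    then obtain x0 s where x0: "x0 \<in> X0" and s: "s \<in> closed_loop d Sigo S x0"
      and ps: "proj Sigo s = []" and ds: "dstar d x0 s = Some y"
      unfolding est_def by blast
    have uo: "set s \<subseteq> Siguo" using proj_nil_uo[of x0 s] ds ps by simp
    have "set s \<subseteq> S []"
    proof
      fix e assume "e \<in> set s"
      then obtain j where j: "j < length s" "s ! j = e" by (auto simp: in_set_conv_nth)
      have "proj Sigo (take j s) = []" using uo proj_uo[of "take j s"] set_take_subset[of j s] by blast
      then show "e \<in> S []" using s j unfolding closed_loop_def by auto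
    qed
    with uo x0 ds show "y \<in> UR d Siguo (S []) X0" unfolding UR_def by blast
  qed
next
  show "UR d Siguo (S []) X0 \<subseteq> est d Sigo S X0 []"
  proof
    fix y assume "y \<in> UR d Siguo (S []) X0"
    then obtain x0 s where x0: "x0 \<in> X0" and s: "set s \<subseteq> Siguo \<inter> S []" and ds: "dstar d x0 s = Some y"
      unfolding UR_def by blast
    have ps: "proj Sigo s = []" using s proj_uo by blast
    have "\<forall>i<length s. s ! i \<in> S (proj Sigo (take i s))"
    proof (intro allI impI)
      fix i assume i: "i < length s"
      have "proj Sigo (take i s) = []" using s proj_uo[of "take i s"] set_take_subset[of i s] by blast
      then show "s ! i \<in> S (proj Sigo (take i s))" using s i nth_mem by fastforce
    qed
    then have "s \<in> closed_loop d Sigo S x0" unfolding closed_loop_def using ds by simp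
    then show "y \<in> est d Sigo S X0 []" unfolding est_def using x0 ps ds by blast
  qed
qed

definition Inv :: "'e list \<Rightarrow> 'x set \<Rightarrow> 'z option \<Rightarrow> bool" where
  "Inv \<beta> q zo \<longleftrightarrow> est d Sigo S X0 \<beta> = UR d Siguo (DeltaHo xi zo) q \<and> (zo = None \<longrightarrow> q = {}) \<and>
     (\<forall>z. zo = Some z \<longrightarrow> z \<in> Z \<and> (q \<noteq> {} \<longrightarrow>
        (\<forall>s\<in>CL_lang d Sigo S X0. proj Sigo s = \<beta> \<longrightarrow> dstar xi z0 s = Some z)))"

lemma Inv_DH:
  assumes "Inv \<beta> q (Some z)" "q \<noteq> {}"
  shows "DeltaH xi z = S \<beta>"
proof -
  have e: "est d Sigo S X0 \<beta> = UR d Siguo (DeltaH xi z) q"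
    using assms(1) unfolding Inv_def DeltaHo_def by simp
  have "q \<subseteq> UR d Siguo (DeltaH xi z) q" by (rule UR_incl)
  with e assms(2) have "est d Sigo S X0 \<beta> \<noteq> {}" by auto
  then obtain y where "y \<in> est d Sigo S X0 \<beta>" by blast
  then obtain x0 s where x0: "x0 \<in> X0" and s: "s \<in> closed_loop d Sigo S x0"
      and ps: "proj Sigo s = \<beta>" unfolding est_def by blast
  then have sc: "s \<in> CL_lang d Sigo S X0" unfolding CL_lang_def by blast
  from H_realizes[OF sc] obtain zs where zs: "dstar xi z0 s = Some zs" "DeltaH xi zs = S (proj Sigo s)"
    by blast
  have all: "\<forall>s\<in>CL_lang d Sigo S X0. proj Sigo s = \<beta> \<longrightarrow> dstar xi z0 s = Some z"
    using assms unfolding Inv_def by simp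
  have "dstar xi z0 s = Some z" using all sc ps by blast
  with zs ps show ?thesis by simp
qed

lemma Inv_init: "Inv [] X0 (Some z0)"
proof (cases "X0 = {}")
  case True
  then show ?thesis unfolding Inv_def using est_nil z0_Z by (simp add: UR_empty_set)
next
  case False
  then obtain x0 where x0: "x0 \<in> X0" by blast
  have "[] \<in> closed_loop d Sigo S x0" unfolding closed_loop_def by simp
  then have "[] \<in> CL_lang d Sigo S X0" using x0 unfolding CL_lang_def by blast
  from H_realizes[OF this] have dh: "DeltaH xi z0 = S []" by (simp add: proj_def)
  have "dstar xi z0 s = Some z0" if s: "s \<in> CL_lang d Sigo S X0" "proj Sigo s = []" for s
  proof -
    from s obtain x1 where "s \<in> closed_loop d Sigo S x1" unfolding CL_lang_def by blast
    then have "dstar d x1 s \<noteq> None" unfolding closed_loop_def by blast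
    then have uo: "set s \<subseteq> Siguo" using proj_nil_uo s by blast
    from H_realizes[OF s(1)] have "dstar xi z0 s \<noteq> None" by auto
    then show ?thesis using H_self[of Z Siguo xi, OF H_unobs z0_Z uo] by blast
  qed
  then show ?thesis unfolding Inv_def using est_nil dh z0_Z by (simp add: DeltaHo_def)
qed

lemma Inv_empty: "Inv \<beta> {} zo \<Longrightarrow> est d Sigo S X0 \<beta> = {}"
  unfolding Inv_def by (simp add: UR_empty_set)

lemma est_empty_snoc: "\<sigma> \<in> Sigo \<Longrightarrow> est d Sigo S X0 \<beta> = {} \<Longrightarrow> est d Sigo S X0 (\<beta> @ [\<sigma>]) = {}"
  using est_snoc by (simp add: NX_def UR_empty_set)

lemma tam_snoc: "tam (h @ [e]) = tam h @ (case e of Hat (Some a) \<Rightarrow> [a] | _ \<Rightarrow> [])"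
  by (simp add: tam_def)

lemma step_att:
  assumes inv: "Inv \<beta> q (Some z)" and sig: "\<sigma> \<in> Sigo"
    and st: "fM d Sigo Siguo Sigv xi (Att q qt z \<sigma>) (Hat a) = Some st'"
  shows "case st' of Env q' qt' zo' \<Rightarrow> Inv (\<beta> @ (case a of Some x \<Rightarrow> [x] | None \<Rightarrow> [])) q' zo'
          | Att _ _ _ _ \<Rightarrow> False"
proof -
  have aV: "Hat a \<in> attV Sigv \<sigma>" using st by (auto split: if_splits)
  have aSig: "a = Some x \<Longrightarrow> x \<in> Sigo" for x
    using aV sig Sigv_sub by (auto simp: attV_def split: if_splits)
  define U where "U = UR d Siguo (DeltaH xi z) q"
  define q' where "q' = NXo d a U"
  define qt' where "qt' = NX (aug d) \<sigma> (UR (aug d) Siguo (DeltaH xi z) qt)"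
  have st2: "Some st' = (if q' = {} then Some (Env q' qt' None)
            else (case a of None \<Rightarrow> Some (Env q' qt' (Some z))
                  | Some \<sigma>a \<Rightarrow> map_option (\<lambda>z'. Env q' qt' (Some z')) (xi z \<sigma>a)))"
    using st aV unfolding q'_def qt'_def U_def by (simp add: Let_def)
  have estU: "est d Sigo S X0 \<beta> = U" using inv unfolding Inv_def U_def DeltaHo_def by simp
  have zZ: "z \<in> Z" using inv unfolding Inv_def by simp
  show ?thesis
  proof (cases "q = {}")
    case True
    then have "U = {}" unfolding U_def by (simp add: UR_empty_set)
    then have q'e: "q' = {}" unfolding q'_def NXo_def NX_def by (simp split: option.splits)
    then have "st' = Env q' qt' None" using st2 by simp
    moreover have "est d Sigo S X0 (\<beta> @ (case a of Some x \<Rightarrow> [x] | None \<Rightarrow> [])) = {}"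
      using estU \<open>U = {}\<close> est_empty_snoc aSig by (cases a) auto
    ultimately show ?thesis using q'e unfolding Inv_def by (simp add: DeltaHo_def UR_empty_set)
  next
    case qne: False
    have dh: "DeltaH xi z = S \<beta>" by (rule Inv_DH[OF inv qne])
    show ?thesis
    proof (cases a)
      case None
      then have q'U: "q' = U" unfolding q'_def NXo_def by simp
      have "q \<subseteq> U" unfolding U_def by (rule UR_incl)
      then have Une: "U \<noteq> {}" using qne by auto
      then have "st' = Env q' qt' (Some z)" using st2 None q'U by simp
      moreover have "UR d Siguo (DeltaH xi z) U = U" unfolding U_def by (rule UR_idem)
      ultimately show ?thesis using None q'U estU Une inv zZ qne unfolding Inv_def
        by (simp add: DeltaHo_def)
    next
      case (Some x)
      have xo: "x \<in> Sigo" using aSig Some by simp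
      have q'N: "q' = NX d x U" unfolding q'_def NXo_def using Some by simp
      show ?thesis
      proof (cases "q' = {}")
        case True
        then have "st' = Env q' qt' None" using st2 by simp
        moreover have "est d Sigo S X0 (\<beta> @ [x]) = {}"
          using est_snoc[OF xo, of \<beta>] estU q'N True by (simp add: UR_empty_set)
        ultimately show ?thesis using True Some unfolding Inv_def by (simp add: DeltaHo_def UR_empty_set)
      next
        case q'ne: False
        then obtain z' where xz: "xi z x = Some z'" and st'e: "st' = Env q' qt' (Some z')"
          using st2 Some by (cases "xi z x") auto
        have xS: "x \<in> S \<beta>" using xz dh unfolding DeltaH_def by blast
        have z'Z: "z' \<in> Z" using xi_closed zZ xz by blast
        have e1: "est d Sigo S X0 (\<beta> @ [x]) = UR d Siguo (S (\<beta> @ [x])) q'"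
          using est_snoc[OF xo, of \<beta>] xS estU q'N by simp
        have zs: "dstar xi z0 s = Some z'" if s: "s \<in> CL_lang d Sigo S X0" "proj Sigo s = \<beta> @ [x]" for s
        proof -
          from s obtain x0 where x0X: "x0 \<in> X0" and sc: "s \<in> closed_loop d Sigo S x0" unfolding CL_lang_def by blast
          from s(2) obtain s1 u where su: "s = s1 @ x # u" and p1: "proj Sigo s1 = \<beta>" and pu: "proj Sigo u = []"
            unfolding proj_def using filter_split_last by metis
          have "s1 \<in> closed_loop d Sigo S x0" using sc su cl_prefix by simp
          then have s1c: "s1 \<in> CL_lang d Sigo S X0" using x0X unfolding CL_lang_def by blast
          have d1: "dstar xi z0 s1 = Some z" using inv qne s1c p1 unfolding Inv_def by blast
          have "dstar d x0 s \<noteq> None" using sc unfolding closed_loop_def by blast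
          then obtain y where "dstar d y u \<noteq> None" using su by (auto simp: dstar_append split: option.splits)
          then have uo: "set u \<subseteq> Siguo" using proj_nil_uo pu by blast
          from H_realizes[OF s(1)] have "dstar xi z0 s \<noteq> None" by auto
          then have "dstar xi z' u \<noteq> None" using su d1 xz by (simp add: dstar_append)
          then have "dstar xi z' u = Some z'" using H_self[of Z Siguo xi, OF H_unobs z'Z uo] by blast
          then show ?thesis using su d1 xz by (simp add: dstar_append)
        qed
        have "q' \<subseteq> UR d Siguo (S (\<beta> @ [x])) q'" by (rule UR_incl)
        then have "q' \<subseteq> est d Sigo S X0 (\<beta> @ [x])" using e1 by simp
        then obtain x0 s where x0: "x0 \<in> X0" and s: "s \<in> closed_loop d Sigo S x0"
          and ps: "proj Sigo s = \<beta> @ [x]" using q'ne unfolding est_def by blast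
        then have sc: "s \<in> CL_lang d Sigo S X0" unfolding CL_lang_def by blast
        from H_realizes[OF sc] zs[OF sc ps] ps have dh': "DeltaH xi z' = S (\<beta> @ [x])" by auto
        show ?thesis using st'e Some e1 dh' z'Z zs q'ne unfolding Inv_def by (simp add: DeltaHo_def)
      qed
    qed
  qed
qed

lemma main:
  "dstar (fM d Sigo Siguo Sigv xi) (M_init X0 z0) h = Some st \<Longrightarrow>
   (case st of Env q qt zo \<Rightarrow> Inv (tam h) q zo | Att q qt z \<sigma> \<Rightarrow> Inv (tam h) q (Some z) \<and> \<sigma> \<in> Sigo)"
proof (induction h arbitrary: st rule: rev_induct)
  case Nil
  then show ?case using Inv_init by (auto simp: M_init_def tam_def)
next
  case (snoc e h)
  from snoc.prems obtain st0 where st0: "dstar (fM d Sigo Siguo Sigv xi) (M_init X0 z0) h = Some st0"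
    and st: "fM d Sigo Siguo Sigv xi st0 e = Some st"
    by (auto simp: dstar_snoc split: option.splits)
  note IH = snoc.IH[OF st0]
  show ?case
  proof (cases st0)
    case (Env q qt zo)
    then obtain z \<sigma> where zo: "zo = Some z" and ee: "e = Obs \<sigma>"
      using st by (cases zo; cases e) auto
    have "\<sigma> \<in> Oen (aug d) Sigo Siguo qt (DeltaH xi z)" and "st = Att q qt z \<sigma>"
      using st Env zo ee by (auto split: if_splits)
    then show ?thesis using IH Env zo ee by (auto simp: Oen_def tam_snoc)
  next
    case (Att q qt z \<sigma>)
    then obtain a where ee: "e = Hat a" using st by (cases e) auto
    have "Inv (tam h) q (Some z)" "\<sigma> \<in> Sigo" using IH Att by auto
    from step_att[OF this st[unfolded Att ee]] show ?thesis
      using ee by (cases st; cases a) (auto simp: tam_snoc)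
  qed
qed

end

theorem proposition1:
  fixes X :: "'x set" and Sigma Sigo Siguo Sigc Siguc Sigv :: "'e set"
    and d :: "'x \<Rightarrow> 'e \<Rightarrow> 'x option" and X0 :: "'x set"
    and S :: "'e list \<Rightarrow> 'e set"
    and Z :: "'z set" and xi :: "'z \<Rightarrow> 'e \<Rightarrow> 'z option" and z0 :: 'z
    and h :: "'e mevent list" and q :: "'x set" and qt :: "('x \<times> 'x) set" and z :: "'z option"
  assumes finX: "finite X" and finSigma: "finite Sigma"
    and d_closed: "\<And>x e y. d x e = Some y \<Longrightarrow> x \<in> X \<and> e \<in> Sigma \<and> y \<in> X"
    and X0_sub: "X0 \<subseteq> X"
    and part_o: "Sigo \<union> Siguo = Sigma" "Sigo \<inter> Siguo = {}"
    and part_c: "Sigc \<union> Siguc = Sigma" "Sigc \<inter> Siguc = {}"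
    and Sigv_sub: "Sigv \<subseteq> Sigo"
    and S_Gamma: "\<And>\<alpha>. \<alpha> \<in> proj Sigo ` gen_lang d X0 \<Longrightarrow> Siguc \<subseteq> S \<alpha> \<and> S \<alpha> \<subseteq> Sigma"
    and z0_Z: "z0 \<in> Z"
    and xi_closed: "\<And>z e z'. z \<in> Z \<Longrightarrow> xi z e = Some z' \<Longrightarrow> e \<in> Sigma \<and> z' \<in> Z"
    and H_unobs: "\<And>z e. z \<in> Z \<Longrightarrow> e \<in> Siguo \<Longrightarrow> xi z e \<noteq> None \<Longrightarrow> xi z e = Some z"
    and H_realizes: "\<And>s. s \<in> CL_lang d Sigo S X0 \<Longrightarrow>
        \<exists>zs. dstar xi z0 s = Some zs \<and> DeltaH xi zs = S (proj Sigo s)"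
    and h_in: "h \<in> Le_M d Sigo Siguo Sigv xi X0 z0"
    and f_h: "fMh d Sigo Siguo Sigv xi X0 z0 h = Some (Env q qt z)"
  shows "est d Sigo S X0 (tam h) = UR d Siguo (DeltaHo xi z) q"
proof -
  interpret ctx Sigma Sigo Siguo Siguc Sigv d X0 S Z xi z0
    apply unfold_locales
    using d_closed part_o Sigv_sub z0_Z xi_closed H_unobs H_realizes by blast+
  from main[OF f_h[unfolded fMh_def]] show ?thesis unfolding Inv_def by simp
qed

end
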